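(* In the SLAR setting, let $(w^{(t)})_{t\ge0}$ be the sequence produced by adversarial training. Then for all $t>0$, $$\|w^{(t+1)}-w^{(t)}\|_2^2\ge\sum_{i:\,|\mu_i|<\varepsilon}(w_i^{(t)})^2.$$
   Context: SLAR setting: $(x,y)$ is drawn from a distribution $\mathcal D$ on $\mathbb R^d\times\{-1,+1\}$, $x=(x_1,\dots,x_d)$ with finite second moments, such that (A1) for each $i$ there is a constant $\mu_i$ with $\mathbb E[x_i\mid y]=y\mu_i$ for $y\in\{-1,1\}$, and (A2) the coordinates $x_1,\dots,x_d$ are mutually independent conditionally on $y$. Fix $\lambda>0$ and a perturbation budget $\varepsilon>0$; $\mathcal B(\varepsilon)=\{a\in\mathbb R^d:\|a\|_\infty\le\varepsilon\}$. A perturbation function is a measurable map $\delta$ assigning to each $(x,y)$ a vector $\delta(x,y)\in\mathcal B(\varepsilon)$. For a perturbation function $\delta$ and $w\in\mathbb R^d$ let $U(\delta,w)=\mathbb E_{(x,y)\sim\mathcal D}[\max(0,1-yw^\top(x+\delta(x,y)))]+\frac{\lambda}{2}\|w\|_2^2$. $\operatorname{sign}$ is coordinatewise with $\operatorname{sign}(0)=0$. Adversarial training (AT): from an arbitrary $w^{(0)}\in\mathbb R^d$, for $t\ge1$ set $\delta^{(t)}(x,y)=-y\varepsilon\operatorname{sign}(w^{(t-1)})$ and $w^{(t)}=\arg\min_{w\in\mathbb R^d}U(\delta^{(t)},w)$ (this minimizer is unique). *)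

theory Defs
  imports "HOL-Probability.Probability"
begin

definition linf_ball :: "real \<Rightarrow> (real^'d) set" where
  "linf_ball eps = {a. \<forall>i. \<bar>a $ i\<bar> \<le> eps}"

definition perturbation_fun ::
  "((real^'d) \<times> real) measure \<Rightarrow> real \<Rightarrow> ((real^'d) \<times> real \<Rightarrow> real^'d) \<Rightarrow> bool" where
  "perturbation_fun D eps delta \<longleftrightarrow>
     delta \<in> borel_measurable D \<and> (\<forall>p\<in>space D. delta p \<in> linf_ball eps)"

definition U_obj ::
  "((real^'d) \<times> real) measure \<Rightarrow> real \<Rightarrow> ((real^'d) \<times> real \<Rightarrow> real^'d) \<Rightarrow> real^'d \<Rightarrow> real" where
  "U_obj D lam delta w =
     (\<integral>p. max 0 (1 - snd p * (w \<bullet> (fst p + delta p))) \<partial>D) + lam / 2 * (norm w)\<^sup>2"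

definition AT_delta :: "real \<Rightarrow> real^'d \<Rightarrow> ((real^'d) \<times> real \<Rightarrow> real^'d)" where
  "AT_delta eps w = (\<lambda>p. \<chi> i. - snd p * eps * sgn (w $ i))"

definition label_event :: "((real^'d) \<times> real) measure \<Rightarrow> real \<Rightarrow> ((real^'d) \<times> real) set" where
  "label_event D c = {p \<in> space D. snd p = c}"

end

theory Submission
  imports Defs
begin


lemma uniform_dens:
  assumes "finite_measure M" "A \<in> sets M" "measure M A > 0"
  shows "uniform_measure M A = density M (\<lambda>x. ennreal (indicator A x / measure M A))"
proof -
  have e: "emeasure M A = ennreal (measure M A)"
    using assms by (simp add: finite_measure.emeasure_eq_measure)
  show ?thesis unfolding uniform_measure_def e
    using assms(3)
    by (intro arg_cong[where f="density M"] ext)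
       (auto simp: divide_ennreal[of 1, simplified] indicator_def)
qed

lemma uniform_integral:
  fixes f :: "'a \<Rightarrow> real"
  assumes "finite_measure M" "A \<in> sets M" "measure M A > 0" "f \<in> borel_measurable M"
  shows "(\<integral>x. f x \<partial>uniform_measure M A) = (\<integral>x. indicator A x * f x \<partial>M) / measure M A"
    and "integrable M f \<Longrightarrow> integrable (uniform_measure M A) f"
proof -
  have m: "(\<lambda>x. indicator A x / measure M A) \<in> borel_measurable M" using assms by measurable
  have nn: "AE x in M. 0 \<le> indicator A x / measure M A" using assms by auto
  show "(\<integral>x. f x \<partial>uniform_measure M A) = (\<integral>x. indicator A x * f x \<partial>M) / measure M A"
    unfolding uniform_dens[OF assms(1-3)] integral_real_density[OF m nn assms(4)]
    by (simp add: mult.commute)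
  assume "integrable M f"
  then have "integrable M (\<lambda>x. (1 / measure M A) * (indicator A x * f x))"
    using assms integrable_real_mult_indicator[of A M f] by (intro integrable_mult_right) (simp add: mult.commute)
  then have "integrable M (\<lambda>x. indicator A x / measure M A * f x)"
    by (simp add: mult.commute)
  then show "integrable (uniform_measure M A) f"
    unfolding uniform_dens[OF assms(1-3)] integrable_real_density[OF m nn assms(4)] by simp
qed

lemma meas_basic:
  fixes D :: "((real^'d) \<times> real) measure"
  assumes "sets D = sets borel"
  shows "(\<lambda>p. fst p $ j) \<in> borel_measurable D" "snd \<in> borel_measurable D"
  unfolding measurable_cong_sets[OF assms refl]
  by (intro borel_measurable_continuous_onI continuous_intros)+



lemma cond_key:
  fixes N :: "((real^'d) \<times> real) measure" and i :: 'd and g :: "real \<Rightarrow> real"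
  assumes P: "prob_space N" and sN: "sets N = sets borel"
    and ind: "prob_space.indep_vars N (\<lambda>_. borel) (\<lambda>i p. fst p $ i) UNIV"
    and intx: "integrable N (\<lambda>p. fst p $ i)"
    and gm: "g \<in> borel_measurable borel" and gb: "\<And>r. \<bar>g r\<bar> \<le> 1"
  shows "(\<integral>p. g (\<Sum>j\<in>-{i}. v j * fst p $ j) * fst p $ i \<partial>N)
          = (\<integral>p. g (\<Sum>j\<in>-{i}. v j * fst p $ j) \<partial>N) * (\<integral>p. fst p $ i \<partial>N)"
proof -
  interpret N: prob_space N by (rule P)
  have r: "N.indep_var (PiM {i} (\<lambda>_. borel)) (\<lambda>p. restrict (\<lambda>j. fst p $ j) {i})
             (PiM (-{i}) (\<lambda>_. borel)) (\<lambda>p. restrict (\<lambda>j. fst p $ j) (-{i}))"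
    by (rule N.indep_var_restrict[OF ind]) auto
  have m1: "(\<lambda>r. r i) \<in> borel_measurable (PiM {i} (\<lambda>_. borel::real measure))"
    by (rule measurable_component_singleton) auto
  have m2: "(\<lambda>r. g (\<Sum>j\<in>-{i}. v j * r j)) \<in> borel_measurable (PiM (-{i}) (\<lambda>_. borel::real measure))"
    apply (rule measurable_compose[OF _ gm])
    apply (rule borel_measurable_sum)
    apply (rule borel_measurable_times)
     apply simp
    apply (rule measurable_component_singleton)
    apply simp
    done
  have c: "N.indep_var borel (\<lambda>p. fst p $ i) borel (\<lambda>p. g (\<Sum>j\<in>-{i}. v j * fst p $ j))"
    using N.indep_var_compose[OF r m1 m2] by (simp add: comp_def)
  have mx: "(\<lambda>p. fst p $ i) \<in> borel_measurable N" and my: "snd \<in> borel_measurable N"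
    unfolding measurable_cong_sets[OF sN refl]
    by (intro borel_measurable_continuous_onI continuous_intros)+
  have mg: "(\<lambda>p. g (\<Sum>j\<in>-{i}. v j * fst p $ j)) \<in> borel_measurable N"
    unfolding measurable_cong_sets[OF sN refl]
    by (rule measurable_compose[OF _ gm]) (intro borel_measurable_continuous_onI continuous_intros)
  have ig: "integrable N (\<lambda>p. g (\<Sum>j\<in>-{i}. v j * fst p $ j))"
    by (rule N.integrable_const_bound[where B=1]) (use gb mg in auto)
  show ?thesis
    using N.indep_var_lebesgue_integral[OF c intx ig] by (simp add: mult.commute)
qed



lemma decomp_nonneg:
  fixes D :: "((real^'d) \<times> real) measure" and Z :: "(real^'d) \<times> real \<Rightarrow> real"
  assumes P: "prob_space D" and sD: "sets D = sets borel"
    and labels: "AE p in D. snd p \<in> {-1, 1}"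
    and iZ: "integrable D Z"
    and cond: "\<And>c. c \<in> {-1,1} \<Longrightarrow> measure D (label_event D c) > 0 \<Longrightarrow>
                (\<integral>p. Z p \<partial>uniform_measure D (label_event D c)) \<ge> 0"
  shows "(\<integral>p. Z p \<partial>D) \<ge> 0"
proof -
  interpret prob_space D by (rule P)
  have my: "snd \<in> borel_measurable D"
    using meas_basic[OF sD] by auto
  have Ls: "label_event D c \<in> sets D" for c
  proof -
    have "snd -` {c} \<inter> space D \<in> sets D" using measurable_sets[OF my] by auto
    moreover have "snd -` {c} \<inter> space D = label_event D c" by (auto simp: label_event_def)
    ultimately show ?thesis by simp
  qed
  have sp: "space D = UNIV" using sets_eq_imp_space_eq[OF sD] by simp
  have mZ: "Z \<in> borel_measurable D" using iZ by auto
  have part: "0 \<le> (\<integral>p. indicator (label_event D c) p * Z p \<partial>D)" if c: "c \<in> {-1,1}" for c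
  proof (cases "measure D (label_event D c) > 0")
    case True
    have "(\<integral>p. Z p \<partial>uniform_measure D (label_event D c))
          = (\<integral>p. indicator (label_event D c) p * Z p \<partial>D) / measure D (label_event D c)"
      by (rule uniform_integral(1)[OF _ Ls True mZ]) (rule finite_measure_axioms)
    with cond[OF c True] True show ?thesis
      by (simp add: zero_le_divide_iff)
  next
    case False
    then have "measure D (label_event D c) = 0" using measure_nonneg[of D] by (meson not_less order_antisym)
    then have "label_event D c \<in> null_sets D"
      using Ls by (simp add: emeasure_eq_measure null_sets_def)
    then have "AE p in D. indicator (label_event D c) p * Z p = 0"
      by (rule AE_mp[OF AE_not_in]) auto
    then show ?thesis by (simp add: integral_eq_zero_AE)
  qed
  have eq: "AE p in D. Z p = indicator (label_event D 1) p * Z p + indicator (label_event D (-1)) p * Z p"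
    using labels by eventually_elim (auto simp: label_event_def indicator_def sp)
  have i1: "integrable D (\<lambda>p. indicator (label_event D c) p * Z p)" for c
    using integrable_real_mult_indicator[OF Ls iZ] by (simp add: mult.commute)
  have "(\<integral>p. Z p \<partial>D) = (\<integral>p. indicator (label_event D 1) p * Z p + indicator (label_event D (-1)) p * Z p \<partial>D)"
    by (rule integral_cong_AE[OF mZ _ eq]) (use Ls mZ in measurable)
  also have "\<dots> = (\<integral>p. indicator (label_event D 1) p * Z p \<partial>D) + (\<integral>p. indicator (label_event D (-1)) p * Z p \<partial>D)"
    by (rule Bochner_Integration.integral_add[OF i1 i1])
  finally show ?thesis using part[of 1] part[of "-1"] by simp
qed



lemma inner_AT: "u \<bullet> (fst p + AT_delta eps W p) = (\<Sum>j\<in>UNIV. u$j * fst p $ j) - snd p * eps * (\<Sum>j\<in>UNIV. u$j * sgn (W$j))"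
  unfolding AT_delta_def inner_vec_def
  by (simp add: algebra_simps sum_subtractf sum_distrib_left)

lemma norm_sq_vec: "(norm (u::real^'d))\<^sup>2 = (\<Sum>j\<in>UNIV. (u$j)\<^sup>2)"
  unfolding power2_norm_eq_inner inner_vec_def by (simp add: power2_eq_square)

lemma sum_split_i:
  fixes v :: "real^'d"
  shows "(\<Sum>j\<in>UNIV. v$j * f j) = (\<Sum>j\<in>UNIV. (\<chi> k. if k = i then 0 else v$k)$j * f j) + v$i * f i"
proof -
  have "(\<Sum>j\<in>UNIV. v$j * f j) = (\<Sum>j\<in>UNIV. (\<chi> k. if k = i then 0 else v$k)$j * f j + (if j = i then v$i * f i else 0))"
    by (rule sum.cong) auto
  then show ?thesis by (simp add: sum.distrib)
qed

lemma sum_minus_i: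
  fixes v :: "real^'d"
  shows "(\<Sum>j\<in>UNIV. (\<chi> k. if k = i then 0 else v$k)$j * f j) = (\<Sum>j\<in>-{i}. v$j * f j)"
proof -
  have "(\<Sum>j\<in>UNIV. (\<chi> k. if k = i then 0 else v$k)$j * f j) = (\<Sum>j\<in>-{i}. (\<chi> k. if k = i then 0 else v$k)$j * f j)"
    by (rule sum.mono_neutral_right) auto
  also have "\<dots> = (\<Sum>j\<in>-{i}. v$j * f j)" by (rule sum.cong) auto
  finally show ?thesis .
qed



lemma my_abs_le_one_plus_sq: "\<bar>z::real\<bar> \<le> 1 + z\<^sup>2"
proof (cases "\<bar>z\<bar> \<le> 1")
  case True then show ?thesis by (simp add: add_increasing2)
next
  case False
  then have "\<bar>z\<bar> * 1 \<le> \<bar>z\<bar> * \<bar>z\<bar>" by (intro mult_left_mono) auto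
  then show ?thesis by (simp add: power2_eq_square abs_mult_self_eq)
qed

lemma key_sign:
  fixes D :: "((real^'d) \<times> real) measure"
    and \<mu> :: "'d \<Rightarrow> real"
    and lam eps :: real and W v :: "real^'d"
  assumes prob: "prob_space D"
    and sets_D: "sets D = sets borel"
    and labels: "AE p in D. snd p \<in> {-1, 1}"
    and second_moments: "\<And>i. integrable D (\<lambda>p. (fst p $ i)\<^sup>2)"
    and A1: "\<And>i c. c \<in> {-1, 1} \<Longrightarrow> measure D (label_event D c) > 0 \<Longrightarrow>
               (\<integral>p. fst p $ i \<partial>(uniform_measure D (label_event D c))) = c * \<mu> i"
    and A2: "\<And>c. c \<in> {-1, 1} \<Longrightarrow> measure D (label_event D c) > 0 \<Longrightarrow>
               prob_space.indep_vars (uniform_measure D (label_event D c))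
                 (\<lambda>_. borel) (\<lambda>i p. fst p $ i) UNIV"
    and lam_pos: "lam > 0"
    and eps_pos: "eps > 0"
    and opt: "\<And>u. U_obj D lam (AT_delta eps W) v \<le> U_obj D lam (AT_delta eps W) u"
    and mu: "\<bar>\<mu> i\<bar> < eps"
  shows "v$i * W$i \<le> 0"
proof (rule ccontr)
  assume neg: "\<not> v$i * W$i \<le> 0"
  interpret prob_space D by (rule prob)
  note mb[measurable] = meas_basic[OF sets_D]
  have sp: "space D = UNIV" using sets_eq_imp_space_eq[OF sets_D] by simp
  define a where "a = v$i"
  define s where "s = sgn (W$i)"
  have "0 < v$i * W$i" using neg by simp
  then have "(0 < v$i \<and> 0 < W$i) \<or> (v$i < 0 \<and> W$i < 0)" by (simp add: zero_less_mult_iff)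
  then have as: "a * s = \<bar>a\<bar>" "a \<noteq> 0" unfolding a_def s_def by auto
  define v' where "v' = (\<chi> k. if k = i then 0 else v$k)"
  define K where "K = (\<Sum>j\<in>UNIV. v'$j * sgn (W$j))"
  define H where "H u p = max 0 (1 - snd p * ((\<Sum>j\<in>UNIV. u$j * fst p $ j) - snd p * eps * (\<Sum>j\<in>UNIV. u$j * sgn (W$j))))" for u :: "real^'d" and p :: "(real^'d) \<times> real"
  define B where "B p = 1 - snd p * ((\<Sum>j\<in>UNIV. v'$j * fst p $ j) - snd p * eps * K)" for p :: "(real^'d) \<times> real"
  define d where "d p = a * (snd p * snd p * eps * s - snd p * fst p $ i)" for p :: "(real^'d) \<times> real"
  define Z where "Z p = (if B p > 0 then d p else 0)" for p
  have Uexp: "U_obj D lam (AT_delta eps W) u = (\<integral>p. H u p \<partial>D) + lam / 2 * (norm u)\<^sup>2" for u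
    unfolding U_obj_def H_def inner_AT ..
  have Hv: "H v p = max 0 (B p + d p)" for p
  proof -
    have "(\<Sum>j\<in>UNIV. v$j * fst p $ j) = (\<Sum>j\<in>UNIV. v'$j * fst p $ j) + a * fst p $ i"
      unfolding v'_def a_def by (rule sum_split_i)
    moreover have "(\<Sum>j\<in>UNIV. v$j * sgn (W$j)) = K + a * s"
      unfolding K_def v'_def a_def s_def by (rule sum_split_i)
    ultimately show ?thesis unfolding H_def B_def d_def by (simp add: algebra_simps)
  qed
  have Hv': "H v' p = max 0 (B p)" for p unfolding H_def B_def K_def ..
  have pw: "H v p \<ge> H v' p + Z p" for p
    unfolding Hv Hv' Z_def by auto
  have ix: "integrable D (\<lambda>p. fst p $ j)" for j
  proof (rule Bochner_Integration.integrable_bound[where f="\<lambda>p. 1 + (fst p $ j)\<^sup>2"])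
    show "integrable D (\<lambda>p. 1 + (fst p $ j)\<^sup>2)"
      using second_moments[of j] by simp
    show "(\<lambda>p. fst p $ j) \<in> borel_measurable D" by measurable
    show "AE p in D. norm (fst p $ j) \<le> norm (1 + (fst p $ j)\<^sup>2)"
    proof (rule AE_I2)
      fix p :: "(real^'d) \<times> real"
      have "\<bar>fst p $ j\<bar> \<le> 1 + (fst p $ j)\<^sup>2" by (rule my_abs_le_one_plus_sq)
      then show "norm (fst p $ j) \<le> norm (1 + (fst p $ j)\<^sup>2)" by simp
    qed
  qed
  have iH: "integrable D (H u)" for u
  proof (rule Bochner_Integration.integrable_bound[where f="\<lambda>p. 1 + (\<Sum>j\<in>UNIV. \<bar>u$j\<bar> * \<bar>fst p $ j\<bar>) + eps * \<bar>\<Sum>j\<in>UNIV. u$j * sgn (W$j)\<bar>"])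
    show "integrable D (\<lambda>p. 1 + (\<Sum>j\<in>UNIV. \<bar>u$j\<bar> * \<bar>fst p $ j\<bar>) + eps * \<bar>\<Sum>j\<in>UNIV. u$j * sgn (W$j)\<bar>)"
      using ix by (intro Bochner_Integration.integrable_add integrable_sum integrable_mult_right integrable_abs) auto
    show "H u \<in> borel_measurable D" unfolding H_def by measurable
    show "AE p in D. norm (H u p) \<le> norm (1 + (\<Sum>j\<in>UNIV. \<bar>u$j\<bar> * \<bar>fst p $ j\<bar>) + eps * \<bar>\<Sum>j\<in>UNIV. u$j * sgn (W$j)\<bar>)"
      using labels
    proof eventually_elim
      case (elim p)
      define S where "S = (\<Sum>j\<in>UNIV. u$j * fst p $ j)"
      define k where "k = (\<Sum>j\<in>UNIV. u$j * sgn (W$j))"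
      have S: "\<bar>S\<bar> \<le> (\<Sum>j\<in>UNIV. \<bar>u$j\<bar> * \<bar>fst p $ j\<bar>)"
        unfolding S_def by (rule order_trans[OF sum_abs]) (simp add: abs_mult)
      have Hs: "H u p = max 0 (1 - snd p * S + eps * k)"
        using elim unfolding H_def S_def[symmetric] k_def[symmetric]
        by (auto simp: algebra_simps)
      have ek: "\<bar>eps * k\<bar> = eps * \<bar>k\<bar>" using eps_pos by (simp add: abs_mult)
      have "\<bar>H u p\<bar> \<le> 1 + \<bar>S\<bar> + eps * \<bar>k\<bar>"
        using elim unfolding Hs by (auto simp: max_def abs_if split: if_splits) (use ek in linarith)+
      with S eps_pos show ?case unfolding k_def by simp
    qed
  qed
  have iZ: "integrable D Z"
  proof (rule Bochner_Integration.integrable_bound[where f="\<lambda>p. \<bar>a\<bar> * (eps + \<bar>fst p $ i\<bar>)"])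
    show "integrable D (\<lambda>p. \<bar>a\<bar> * (eps + \<bar>fst p $ i\<bar>))"
      using ix by (intro integrable_mult_right Bochner_Integration.integrable_add integrable_abs) auto
    show "Z \<in> borel_measurable D" unfolding Z_def B_def d_def by measurable
    show "AE p in D. norm (Z p) \<le> norm (\<bar>a\<bar> * (eps + \<bar>fst p $ i\<bar>))"
      using labels
    proof eventually_elim
      case (elim p)
      have "\<bar>d p\<bar> \<le> \<bar>a\<bar> * (eps + \<bar>fst p $ i\<bar>)"
        using elim eps_pos unfolding d_def s_def
        by (auto simp: abs_mult sgn_if intro!: mult_left_mono)
      then show ?case using eps_pos unfolding Z_def by auto
    qed
  qed
  have EZ: "(\<integral>p. Z p \<partial>D) \<ge> 0"
  proof (rule decomp_nonneg[OF prob sets_D labels iZ])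
    fix c :: real assume c: "c \<in> {-1,1}" and pos: "measure D (label_event D c) > 0"
    define L where "L = label_event D c"
    define N where "N = uniform_measure D L"
    have Ls: "L \<in> sets D"
    proof -
      have "snd -` {c} \<inter> space D \<in> sets D" using measurable_sets[OF mb(2)] by auto
      moreover have "snd -` {c} \<inter> space D = L" by (auto simp: label_event_def L_def)
      ultimately show ?thesis by simp
    qed
    have posL: "measure D L > 0" using pos L_def by simp
    have sN: "sets N = sets borel" unfolding N_def using sets_D by simp
    have PN: "prob_space N" unfolding N_def
      using posL Ls by (intro prob_space_uniform_measure) (auto simp: emeasure_eq_measure)
    interpret N: prob_space N by (rule PN)
    have AEc: "AE p in N. snd p = c" unfolding N_def
      by (rule AE_uniform_measureI[OF Ls]) (auto simp: L_def label_event_def)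
    have cc: "c * c = 1" using c by auto
    define g where "g r = (if 1 - c * (r - c * eps * K) > 0 then 1 else (0::real))" for r
    define G where "G p = g (\<Sum>j\<in>-{i}. v$j * fst p $ j)" for p :: "(real^'d) \<times> real"
    have gm: "g \<in> borel_measurable borel" unfolding g_def by measurable
    have gb: "\<bar>g r\<bar> \<le> 1" for r unfolding g_def by auto
    have mxN: "(\<lambda>p. fst p $ i) \<in> borel_measurable N"
      unfolding measurable_cong_sets[OF sN refl]
      by (intro borel_measurable_continuous_onI continuous_intros)
    have mGN: "G \<in> borel_measurable N" unfolding G_def measurable_cong_sets[OF sN refl]
      by (rule measurable_compose[OF _ gm]) (intro borel_measurable_continuous_onI continuous_intros)
    have mZN: "Z \<in> borel_measurable N"
      using borel_measurable_integrable[OF iZ] unfolding N_def measurable_cong_sets[OF sets_uniform_measure refl] .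
    have ixN: "integrable N (\<lambda>p. fst p $ i)" unfolding N_def
      by (rule uniform_integral(2)[OF finite_measure_axioms Ls posL mb(1) ix])
    have iG: "integrable N G"
      by (rule N.integrable_const_bound[where B=1]) (use gb mGN in \<open>auto simp: G_def\<close>)
    have iGx: "integrable N (\<lambda>p. G p * fst p $ i)"
    proof (rule Bochner_Integration.integrable_bound[where f="\<lambda>p. fst p $ i"])
      show "integrable N (\<lambda>p. fst p $ i)" by (rule ixN)
      show "(\<lambda>p. G p * fst p $ i) \<in> borel_measurable N" using mGN mxN by (rule borel_measurable_times)
      show "AE p in N. norm (G p * fst p $ i) \<le> norm (fst p $ i)"
        using gb by (auto simp: G_def abs_mult intro!: mult_left_le_one_le)
    qed
    have ZN: "AE p in N. Z p = (a * eps * s) * G p - (a * c) * (G p * fst p $ i)"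
      using AEc
    proof eventually_elim
      case (elim p)
      have "(\<Sum>j\<in>UNIV. v'$j * fst p $ j) = (\<Sum>j\<in>-{i}. v$j * fst p $ j)"
        unfolding v'_def by (rule sum_minus_i)
      then have "B p = 1 - c * ((\<Sum>j\<in>-{i}. v$j * fst p $ j) - c * eps * K)"
        unfolding B_def using elim by simp
      moreover have "d p = a * eps * s - a * c * fst p $ i"
        unfolding d_def using elim cc by (simp add: algebra_simps)
      ultimately show ?case unfolding Z_def G_def g_def by auto
    qed
    have EGx: "(\<integral>p. G p * fst p $ i \<partial>N) = (\<integral>p. G p \<partial>N) * (c * \<mu> i)"
    proof -
      have "(\<integral>p. G p * fst p $ i \<partial>N) = (\<integral>p. G p \<partial>N) * (\<integral>p. fst p $ i \<partial>N)"
        unfolding G_def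
        by (rule cond_key[OF PN sN _ ixN gm gb]) (use A2[OF c pos] in \<open>simp add: N_def L_def\<close>)
      also have "(\<integral>p. fst p $ i \<partial>N) = c * \<mu> i"
        using A1[OF c pos] by (simp add: N_def L_def)
      finally show ?thesis .
    qed
    have "(\<integral>p. Z p \<partial>N) = (\<integral>p. (a * eps * s) * G p - (a * c) * (G p * fst p $ i) \<partial>N)"
      by (rule integral_cong_AE[OF mZN _ ZN])
         (intro borel_measurable_diff borel_measurable_times borel_measurable_const mGN mxN)
    also have "\<dots> = (a * eps * s) * (\<integral>p. G p \<partial>N) - (a * c) * (\<integral>p. G p * fst p $ i \<partial>N)"
      using iG iGx by simp
    also have "\<dots> = (\<integral>p. G p \<partial>N) * (a * s * eps - a * (c * c) * \<mu> i)"
      unfolding EGx by (simp add: algebra_simps)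
    also have "\<dots> = (\<integral>p. G p \<partial>N) * (\<bar>a\<bar> * eps - a * \<mu> i)"
      using as cc by simp
    finally have EZN: "(\<integral>p. Z p \<partial>N) = (\<integral>p. G p \<partial>N) * (\<bar>a\<bar> * eps - a * \<mu> i)" .
    have "0 \<le> (\<integral>p. G p \<partial>N)"
      by (rule integral_nonneg_AE) (auto simp: G_def g_def)
    moreover have "a * \<mu> i \<le> \<bar>a\<bar> * eps"
    proof -
      have "a * \<mu> i \<le> \<bar>a\<bar> * \<bar>\<mu> i\<bar>" by (simp add: abs_mult[symmetric])
      also have "\<dots> \<le> \<bar>a\<bar> * eps" using mu by (intro mult_left_mono) auto
      finally show ?thesis .
    qed
    ultimately show "(\<integral>p. Z p \<partial>uniform_measure D (label_event D c)) \<ge> 0"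
      using EZN unfolding N_def L_def by simp
  qed
  have "(\<integral>p. H v p \<partial>D) \<ge> (\<integral>p. H v' p + Z p \<partial>D)"
    by (rule integral_mono[OF _ iH pw]) (use iH iZ in auto)
  also have "(\<integral>p. H v' p + Z p \<partial>D) = (\<integral>p. H v' p \<partial>D) + (\<integral>p. Z p \<partial>D)"
    by (rule Bochner_Integration.integral_add[OF iH iZ])
  finally have I: "(\<integral>p. H v p \<partial>D) \<ge> (\<integral>p. H v' p \<partial>D)" using EZ by simp
  have "(norm v)\<^sup>2 = (norm v')\<^sup>2 + a\<^sup>2"
    unfolding norm_sq_vec using sum_split_i[of v "\<lambda>j. v$j" i]
    unfolding v'_def a_def
    by (simp add: power2_eq_square) (intro sum.cong, auto)
  then have "U_obj D lam (AT_delta eps W) v > U_obj D lam (AT_delta eps W) v'"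
  proof -
    have "0 < lam * a\<^sup>2 / 2" using lam_pos as(2) by simp
    then show ?thesis unfolding Uexp using I \<open>(norm v)\<^sup>2 = (norm v')\<^sup>2 + a\<^sup>2\<close>
      by (simp add: algebra_simps)
  qed
  with opt[of v'] show False by simp
qed

theorem mainTheorem9:
  fixes D :: "((real^'d) \<times> real) measure"
    and \<mu> :: "'d \<Rightarrow> real"
    and lam eps :: real
    and w :: "nat \<Rightarrow> real^'d"
  assumes prob: "prob_space D"
    and sets_D: "sets D = sets borel"
    and labels: "AE p in D. snd p \<in> {-1, 1}"
    and second_moments: "\<And>i. integrable D (\<lambda>p. (fst p $ i)\<^sup>2)"
    and A1: "\<And>i c. c \<in> {-1, 1} \<Longrightarrow> measure D (label_event D c) > 0 \<Longrightarrow>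
               (\<integral>p. fst p $ i \<partial>(uniform_measure D (label_event D c))) = c * \<mu> i"
    and A2: "\<And>c. c \<in> {-1, 1} \<Longrightarrow> measure D (label_event D c) > 0 \<Longrightarrow>
               prob_space.indep_vars (uniform_measure D (label_event D c))
                 (\<lambda>_. borel) (\<lambda>i p. fst p $ i) UNIV"
    and lam_pos: "lam > 0"
    and eps_pos: "eps > 0"
    and AT: "\<And>t v. t \<ge> 1 \<Longrightarrow>
               U_obj D lam (AT_delta eps (w (t - 1))) (w t)
                 \<le> U_obj D lam (AT_delta eps (w (t - 1))) v"
  shows "\<forall>t>0. (norm (w (t + 1) - w t))\<^sup>2 \<ge> (\<Sum>i\<in>{i. \<bar>\<mu> i\<bar> < eps}. (w t $ i)\<^sup>2)"
  proof (intro allI impI)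
  fix t :: nat assume "t > 0"
  have opt: "U_obj D lam (AT_delta eps (w t)) (w (t+1)) \<le> U_obj D lam (AT_delta eps (w t)) u" for u
    using AT[of "t+1" u] by simp
  have key: "w (t+1) $ i * w t $ i \<le> 0" if "\<bar>\<mu> i\<bar> < eps" for i
    by (rule key_sign[OF prob sets_D labels second_moments A1 A2 lam_pos eps_pos opt that])
  have "(\<Sum>i\<in>{i. \<bar>\<mu> i\<bar> < eps}. (w t $ i)\<^sup>2) \<le> (\<Sum>i\<in>{i. \<bar>\<mu> i\<bar> < eps}. (w (t+1) $ i - w t $ i)\<^sup>2)"
  proof (rule sum_mono)
    fix i assume "i \<in> {i. \<bar>\<mu> i\<bar> < eps}"
    then have "w (t+1) $ i * w t $ i \<le> 0" using key by auto
    moreover have "(w (t+1) $ i - w t $ i)\<^sup>2 = (w (t+1) $ i)\<^sup>2 - 2 * (w (t+1) $ i * w t $ i) + (w t $ i)\<^sup>2"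
      by (simp add: power2_diff)
    moreover have "0 \<le> (w (t+1) $ i)\<^sup>2" by simp
    ultimately show "(w t $ i)\<^sup>2 \<le> (w (t+1) $ i - w t $ i)\<^sup>2" by linarith
  qed
  also have "\<dots> \<le> (\<Sum>i\<in>UNIV. (w (t+1) $ i - w t $ i)\<^sup>2)"
    by (rule sum_mono2) auto
  also have "\<dots> = (norm (w (t + 1) - w t))\<^sup>2"
    unfolding norm_sq_vec by simp
  finally show "(norm (w (t + 1) - w t))\<^sup>2 \<ge> (\<Sum>i\<in>{i. \<bar>\<mu> i\<bar> < eps}. (w t $ i)\<^sup>2)" .
qed

end
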